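(* Let $\Bbbk$ be a field, $V$ a finite-dimensional $\Bbbk$-vector space and $R$ a Hecke symmetry on $V$ with parameter $q$. Assume $\dim\Upsilon^{(n)}=1$ and $\Upsilon^{(n+1)}=0$ for some $n>0$, fix $0\neq t\in\Upsilon^{(n)}$, and let $\theta\in GL(V)$ be defined by $R_n^{(n+1)}R_{n-1}^{(n+1)}\cdots R_1^{(n+1)}(vt)=t\,\theta(v)$ for all $v\in V$. Then $\theta\otimes\theta$ commutes with $R$. In particular, $\theta$ extends to automorphisms of $\Lambda(V,R)$ and of $\mathbb{S}(V,R)$.
   Context: A Hecke symmetry on $V$ with parameter $0\neq q\in\Bbbk$ is a linear map $R:V\otimes V\to V\otimes V$ satisfying $(R\otimes\mathrm{Id}_V)(\mathrm{Id}_V\otimes R)(R\otimes\mathrm{Id}_V)=(\mathrm{Id}_V\otimes R)(R\otimes\mathrm{Id}_V)(\mathrm{Id}_V\otimes R)$ and $(R-q\,\mathrm{Id})(R+\mathrm{Id})=0$ ($q=-1$ allowed). $\mathbb{S}(V,R)$ and $\Lambda(V,R)$ are the quotients of the tensor algebra $\mathbb{T}(V)$ by the ideals generated by $\mathrm{Im}(R-q\,\mathrm{Id})$ and $\mathrm{Ker}(R-q\,\mathrm{Id})$ respectively. In $\mathbb{T}(V)$ products are written $ab=a\otimes b$. For $p\ge2$, $1\le i\le p-1$, $R_i^{(p)}=\mathrm{Id}_V^{\otimes(i-1)}\otimes R\otimes\mathrm{Id}_V^{\otimes(p-i-1)}$. $\Upsilon^{(0)}=\Bbbk$, $\Upsilon^{(1)}=V$,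 $\Upsilon^{(p)}=\bigcap_{i=1}^{p-1}(R_i^{(p)}-q\,\mathrm{Id})V^{\otimes p}$ ($p\ge2$). The operator $\theta$ is well defined and invertible under the hypotheses. *)

theory Defs
  imports Complex_Main "HOL-Library.Function_Algebras"
begin

text \<open>V is a d-dimensional vector space over the field 'k with
  basis e_0,...,e_(d-1).  An element of the tensor power V^(p) is represented by its
  coefficient function on index lists (words of length p over {0..<d}); the function
  vanishes outside such words.  Products in T(V) are concatenation of words.\<close>

definition idx :: "nat \<Rightarrow> nat \<Rightarrow> nat list set" where
  "idx d p = {xs. length xs = p \<and> set xs \<subseteq> {..<d}}"

definition tensors :: "nat \<Rightarrow> nat \<Rightarrow> (nat list \<Rightarrow> 'k::field) set" where
  "tensors d p = {f. \<forall>xs. f xs \<noteq> 0 \<longrightarrow> xs \<in> idx d p}"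

definition tscale :: "'k::field \<Rightarrow> (nat list \<Rightarrow> 'k) \<Rightarrow> (nat list \<Rightarrow> 'k)" where
  "tscale c f = (\<lambda>xs. c * f xs)"

definition tmul :: "nat \<Rightarrow> (nat list \<Rightarrow> 'k::field) \<Rightarrow> (nat list \<Rightarrow> 'k) \<Rightarrow> (nat list \<Rightarrow> 'k)" where
  "tmul i a b = (\<lambda>xs. a (take i xs) * b (drop i xs))"

text \<open>The linear map R on V\<otimes>V is given by its matrix Rm:
  R(e_a \<otimes> e_b) = \<Sum>_{c,e} Rm c e a b  e_c \<otimes> e_e.
  Rop d Rm p i is R acting on tensor factors i, i+1 (0-based) of V^(p), i.e. the
  paper's R_(i+1)^(p).\<close>
definition Rop :: "nat \<Rightarrow> (nat \<Rightarrow> nat \<Rightarrow> nat \<Rightarrow> nat \<Rightarrow> 'k::field) \<Rightarrow> nat \<Rightarrow> nat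
    \<Rightarrow> (nat list \<Rightarrow> 'k) \<Rightarrow> (nat list \<Rightarrow> 'k)" where
  "Rop d Rm p i f = (\<lambda>xs. if xs \<in> idx d p then
      (\<Sum>a<d. \<Sum>b<d. Rm (xs!i) (xs!(i+1)) a b * f (xs[i := a, Suc i := b])) else 0)"

definition hecke :: "nat \<Rightarrow> (nat \<Rightarrow> nat \<Rightarrow> nat \<Rightarrow> nat \<Rightarrow> 'k::field) \<Rightarrow> 'k \<Rightarrow> bool" where
  "hecke d Rm q \<longleftrightarrow> q \<noteq> 0 \<and>
     (\<forall>f\<in>tensors d 3. Rop d Rm 3 0 (Rop d Rm 3 1 (Rop d Rm 3 0 f))
                      = Rop d Rm 3 1 (Rop d Rm 3 0 (Rop d Rm 3 1 f))) \<and>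
     (\<forall>f\<in>tensors d 2. let g = Rop d Rm 2 0 f + f in Rop d Rm 2 0 g - tscale q g = 0)"

text \<open>Upsilon^(p): intersection over 1 \<le> i \<le> p-1 of Im(R_i^(p) - q Id);
  for p = 0, 1 the (empty) intersection is the whole of V^(p) (= k, resp. V).\<close>
definition Upsilon :: "nat \<Rightarrow> (nat \<Rightarrow> nat \<Rightarrow> nat \<Rightarrow> nat \<Rightarrow> 'k::field) \<Rightarrow> 'k \<Rightarrow> nat
    \<Rightarrow> (nat list \<Rightarrow> 'k) set" where
  "Upsilon d Rm q p = {f \<in> tensors d p. \<forall>i. Suc i < p \<longrightarrow>
      f \<in> (\<lambda>g. Rop d Rm p i g - tscale q g) ` tensors d p}"

definition tdim :: "(nat list \<Rightarrow> 'k::field) set \<Rightarrow> nat" where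
  "tdim S = vector_space.dim (tscale :: 'k \<Rightarrow> _) S"

definition tspan :: "(nat list \<Rightarrow> 'k::field) set \<Rightarrow> (nat list \<Rightarrow> 'k) set" where
  "tspan S = module.span (tscale :: 'k \<Rightarrow> _) S"

text \<open>R_n^(n+1) R_(n-1)^(n+1) ... R_1^(n+1): R_1 is applied first.\<close>
definition Rchain :: "nat \<Rightarrow> (nat \<Rightarrow> nat \<Rightarrow> nat \<Rightarrow> nat \<Rightarrow> 'k::field) \<Rightarrow> nat
    \<Rightarrow> (nat list \<Rightarrow> 'k) \<Rightarrow> (nat list \<Rightarrow> 'k)" where
  "Rchain d Rm n f = foldl (\<lambda>g i. Rop d Rm (Suc n) i g) f [0..<n]"

text \<open>theta given by its matrix Th: theta(e_j) = \<Sum>_i Th i j e_i.  thpow d Th p is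
  theta^(\<otimes>p) acting on V^(p) (the degree-p part of the induced map on T(V)).\<close>
definition thpow :: "nat \<Rightarrow> (nat \<Rightarrow> nat \<Rightarrow> 'k::field) \<Rightarrow> nat
    \<Rightarrow> (nat list \<Rightarrow> 'k) \<Rightarrow> (nat list \<Rightarrow> 'k)" where
  "thpow d Th p f = (\<lambda>xs. if xs \<in> idx d p then
      (\<Sum>ys\<in>idx d p. (\<Prod>k<p. Th (xs!k) (ys!k)) * f ys) else 0)"

text \<open>Degree-p component of the two-sided ideal of T(V) generated by W \<subseteq> V^(2):
  the span of all a w b with a \<in> V^(i), w \<in> W, b \<in> V^(p-i-2).\<close>
definition ideal_comp :: "nat \<Rightarrow> (nat list \<Rightarrow> 'k::field) set \<Rightarrow> nat \<Rightarrow> (nat list \<Rightarrow> 'k) set" where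
  "ideal_comp d W p = tspan {tmul (i+2) (tmul i a w) b | i a w b.
      i + 2 \<le> p \<and> a \<in> tensors d i \<and> w \<in> W \<and> b \<in> tensors d (p - i - 2)}"

text \<open>Generators of the ideals defining S(V,R) (Im(R - q Id)) and
  Lambda(V,R) (Ker(R - q Id)).\<close>
definition ImRq :: "nat \<Rightarrow> (nat \<Rightarrow> nat \<Rightarrow> nat \<Rightarrow> nat \<Rightarrow> 'k::field) \<Rightarrow> 'k \<Rightarrow> (nat list \<Rightarrow> 'k) set" where
  "ImRq d Rm q = (\<lambda>g. Rop d Rm 2 0 g - tscale q g) ` tensors d 2"

definition KerRq :: "nat \<Rightarrow> (nat \<Rightarrow> nat \<Rightarrow> nat \<Rightarrow> nat \<Rightarrow> 'k::field) \<Rightarrow> 'k \<Rightarrow> (nat list \<Rightarrow> 'k) set" where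
  "KerRq d Rm q = {g \<in> tensors d 2. Rop d Rm 2 0 g - tscale q g = 0}"

end

theory Submission
  imports Defs
begin


definition delta :: "nat list \<Rightarrow> nat list \<Rightarrow> 'k::field" where
  "delta xs = (\<lambda>ys. if ys = xs then 1 else 0)"

definition cut :: "nat \<Rightarrow> nat \<Rightarrow> (nat list \<Rightarrow> 'k::field) \<Rightarrow> (nat list \<Rightarrow> 'k)" where
  "cut d p f = (\<lambda>xs. if xs \<in> idx d p then f xs else 0)"

definition lin :: "((nat list \<Rightarrow> 'k::field) \<Rightarrow> (nat list \<Rightarrow> 'k)) \<Rightarrow> bool" where
  "lin L \<longleftrightarrow> (\<forall>f g. L (f + g) = L f + L g) \<and> (\<forall>c f. L (tscale c f) = tscale c (L f))"

lemma module_tscale: "module (tscale :: 'k::field \<Rightarrow> (nat list \<Rightarrow> 'k) \<Rightarrow> _)"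
  by unfold_locales (auto simp: tscale_def fun_eq_iff algebra_simps)

lemma idx_iff: "xs \<in> idx d p \<longleftrightarrow> length xs = p \<and> set xs \<subseteq> {..<d}"
  by (simp add: idx_def)

lemma finite_idx: "finite (idx d p)"
proof -
  have "idx d p \<subseteq> {xs. set xs \<subseteq> {..<d} \<and> length xs = p}" by (auto simp: idx_def)
  moreover have "finite {xs. set xs \<subseteq> {..<d} \<and> length xs = p}"
    by (rule finite_lists_length_eq) simp
  ultimately show ?thesis by (rule finite_subset)
qed

lemma tensorsD: "f \<in> tensors d p \<Longrightarrow> xs \<notin> idx d p \<Longrightarrow> f xs = 0"
  by (auto simp: tensors_def)

lemma tensorsI: "(\<And>xs. xs \<notin> idx d p \<Longrightarrow> f xs = 0) \<Longrightarrow> f \<in> tensors d p"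
  by (auto simp: tensors_def)

lemma sum_fun_apply: "(\<Sum>a\<in>A. F a) x = (\<Sum>a\<in>A. F a x)"
  by (induct A rule: infinite_finite_induct) auto

lemma decomp:
  assumes "f \<in> tensors d p"
  shows "f = (\<Sum>xs\<in>idx d p. tscale (f xs) (delta xs))"
proof
  fix ys
  have "(\<Sum>xs\<in>idx d p. tscale (f xs) (delta xs)) ys = (\<Sum>xs\<in>idx d p. if ys = xs then f xs else 0)"
    by (simp add: sum_fun_apply tscale_def delta_def if_distrib cong: if_cong)
  also have "\<dots> = (if ys \<in> idx d p then f ys else 0)"
    using finite_idx by (simp add: sum.delta)
  also have "\<dots> = f ys" using assms tensorsD by auto
  finally show "f ys = (\<Sum>xs\<in>idx d p. tscale (f xs) (delta xs)) ys" by simp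
qed

lemma lin_zero: "lin L \<Longrightarrow> L 0 = 0"
proof -
  assume "lin L"
  then have "L 0 = L 0 + L 0" unfolding lin_def by (metis add_0)
  then show ?thesis by simp
qed

lemma lin_sum: "lin L \<Longrightarrow> L (\<Sum>a\<in>A. F a) = (\<Sum>a\<in>A. L (F a))"
  by (induct A rule: infinite_finite_induct) (auto simp: lin_zero lin_def)

lemma lin_ext:
  assumes "lin L" "lin M" "\<And>xs. xs \<in> idx d p \<Longrightarrow> L (delta xs) = M (delta xs)"
    and "f \<in> tensors d p"
  shows "L f = M f"
proof -
  have "L f = L (\<Sum>xs\<in>idx d p. tscale (f xs) (delta xs))" using decomp[OF assms(4)] by simp
  also have "\<dots> = (\<Sum>xs\<in>idx d p. tscale (f xs) (L (delta xs)))"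
    using assms(1) by (simp add: lin_sum) (simp add: lin_def)
  also have "\<dots> = (\<Sum>xs\<in>idx d p. tscale (f xs) (M (delta xs)))" using assms(3) by simp
  also have "\<dots> = M (\<Sum>xs\<in>idx d p. tscale (f xs) (delta xs))"
    using assms(2) by (simp add: lin_sum) (simp add: lin_def)
  finally show ?thesis using decomp[OF assms(4)] by simp
qed

lemma lin_comp: "lin L \<Longrightarrow> lin M \<Longrightarrow> lin (\<lambda>f. L (M f))"
  by (simp add: lin_def)

lemma lin_id: "lin (\<lambda>f. f)" by (simp add: lin_def)

lemma upd_idx: "xs \<in> idx d p \<Longrightarrow> a < d \<Longrightarrow> b < d \<Longrightarrow> xs[i := a, j := b] \<in> idx d p"
  by (simp add: idx_def set_update_subsetI)

lemma Rop_lin: "lin (Rop d Rm p i)"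
  by (simp add: lin_def Rop_def tscale_def fun_eq_iff distrib_left sum.distrib sum_distrib_left mult.left_commute)

lemma Rop_tensors: "Rop d Rm p i f \<in> tensors d p"
  by (auto simp: tensors_def Rop_def)

lemma Rop_local:
  assumes "\<And>xs. xs \<in> idx d p \<Longrightarrow> f xs = g xs"
  shows "Rop d Rm p i f = Rop d Rm p i g"
  unfolding Rop_def using assms upd_idx by (intro ext) (auto intro!: sum.cong)

lemma Rop_cut: "Rop d Rm p i (cut d p f) = Rop d Rm p i f"
  by (rule Rop_local) (simp add: cut_def)

lemma cut_tensors: "cut d p f \<in> tensors d p"
  by (auto simp: cut_def tensors_def)



lemma Rop_at: "xs \<in> idx d p \<Longrightarrow> Rop d Rm p i f xs =
   (\<Sum>a<d. \<Sum>b<d. Rm (xs!i) (xs!(i+1)) a b * f (xs[i := a, Suc i := b]))"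
  by (simp add: Rop_def)

lemma Rop_out: "xs \<notin> idx d p \<Longrightarrow> Rop d Rm p i f xs = 0"
  by (simp add: Rop_def)

lemma Rop_far:
  assumes "i + 2 \<le> j"
  shows "Rop d Rm p i (Rop d Rm p j f) = Rop d Rm p j (Rop d Rm p i f)"
proof
  fix xs :: "nat list"
  show "Rop d Rm p i (Rop d Rm p j f) xs = Rop d Rm p j (Rop d Rm p i f) xs"
  proof (cases "xs \<in> idx d p")
    case False then show ?thesis by (simp add: Rop_out)
  next
    case True
    have ne: "i \<noteq> j" "Suc i \<noteq> j" "i \<noteq> Suc j" "Suc i \<noteq> Suc j" using assms by auto
    have upd: "xs[i := a, Suc i := b, j := c, Suc j := e] = xs[j := c, Suc j := e, i := a, Suc i := b]"
      for a b c e using ne by (metis list_update_swap)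
    let ?F = "\<lambda>a b c e. Rm (xs!i) (xs!(i+1)) a b * (Rm (xs!j) (xs!(j+1)) c e *
                 f (xs[i := a, Suc i := b, j := c, Suc j := e]))"
    have "Rop d Rm p i (Rop d Rm p j f) xs = (\<Sum>a<d. \<Sum>b<d. \<Sum>c<d. \<Sum>e<d. ?F a b c e)"
      using True ne assms upd_idx[OF True]
      by (simp add: Rop_at sum_distrib_left)
    also have "\<dots> = (\<Sum>c<d. \<Sum>e<d. \<Sum>a<d. \<Sum>b<d. ?F a b c e)"
    proof -
      have "(\<Sum>a<d. \<Sum>b<d. \<Sum>c<d. \<Sum>e<d. ?F a b c e) = (\<Sum>a<d. \<Sum>c<d. \<Sum>b<d. \<Sum>e<d. ?F a b c e)"
        by (rule sum.cong[OF refl], rule sum.swap)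
      also have "\<dots> = (\<Sum>c<d. \<Sum>a<d. \<Sum>b<d. \<Sum>e<d. ?F a b c e)"
        by (rule sum.swap)
      also have "\<dots> = (\<Sum>c<d. \<Sum>a<d. \<Sum>e<d. \<Sum>b<d. ?F a b c e)"
        by (rule sum.cong[OF refl], rule sum.cong[OF refl], rule sum.swap)
      also have "\<dots> = (\<Sum>c<d. \<Sum>e<d. \<Sum>a<d. \<Sum>b<d. ?F a b c e)"
        by (rule sum.cong[OF refl], rule sum.swap)
      finally show ?thesis .
    qed
    also have "\<dots> = Rop d Rm p j (Rop d Rm p i f) xs"
      using True ne assms upd_idx[OF True]
      by (simp add: Rop_at sum_distrib_left upd mult.left_commute)
    finally show ?thesis .
  qed
qed



lemma embed_idx:
  assumes "xs \<in> idx d p" "i + 3 \<le> p" "zs \<in> idx d 3"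
  shows "take i xs @ zs @ drop (i+3) xs \<in> idx d p"
  using assms by (auto simp: idx_def dest: in_set_takeD in_set_dropD)

lemma Rop_embed:
  assumes xs: "xs \<in> idx d p" and ip: "i + 3 \<le> p" and zs: "zs \<in> idx d 3" and j: "j < 2"
  shows "Rop d Rm p (i+j) F (take i xs @ zs @ drop (i+3) xs)
       = Rop d Rm 3 j (\<lambda>zs. F (take i xs @ zs @ drop (i+3) xs)) zs"
proof -
  have li: "length (take i xs) = i" using xs ip by (simp add: idx_def)
  have l3: "length zs = 3" using zs by (simp add: idx_def)
  have n1: "(take i xs @ zs @ drop (i+3) xs) ! (i+j) = zs ! j"
    using li l3 j by (simp add: nth_append)
  have n2: "(take i xs @ zs @ drop (i+3) xs) ! (i+j+1) = zs ! (j+1)"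
    using li l3 j by (simp add: nth_append)
  have u: "(take i xs @ zs @ drop (i+3) xs)[i+j := a, Suc (i+j) := b]
        = take i xs @ zs[j := a, Suc j := b] @ drop (i+3) xs" for a b
    using li l3 j by (simp add: list_update_append)
  show ?thesis
    using embed_idx[OF xs ip zs] zs n1 n2 u by (simp add: Rop_at)
qed

lemma hecke_braid3:
  assumes "hecke d Rm q"
  shows "Rop d Rm 3 0 (Rop d Rm 3 1 (Rop d Rm 3 0 g)) = Rop d Rm 3 1 (Rop d Rm 3 0 (Rop d Rm 3 1 g))"
proof -
  have "Rop d Rm 3 0 (Rop d Rm 3 1 (Rop d Rm 3 0 (cut d 3 g))) = Rop d Rm 3 1 (Rop d Rm 3 0 (Rop d Rm 3 1 (cut d 3 g)))"
    using assms cut_tensors unfolding hecke_def by blast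
  then show ?thesis by (simp add: Rop_cut)
qed

lemma Rop_braid:
  assumes hk: "hecke d Rm q" and ip: "i + 3 \<le> p"
  shows "Rop d Rm p i (Rop d Rm p (i+1) (Rop d Rm p i f)) = Rop d Rm p (i+1) (Rop d Rm p i (Rop d Rm p (i+1) f))"
proof
  fix xs :: "nat list"
  show "Rop d Rm p i (Rop d Rm p (i+1) (Rop d Rm p i f)) xs = Rop d Rm p (i+1) (Rop d Rm p i (Rop d Rm p (i+1) f)) xs"
  proof (cases "xs \<in> idx d p")
    case False then show ?thesis by (simp add: Rop_out)
  next
    case xs: True
    define E where "E = (\<lambda>zs. take i xs @ zs @ drop (i+3) xs)"
    define z0 where "z0 = take 3 (drop i xs)"
    have Ez0: "E z0 = xs" unfolding E_def z0_def
      by (metis add.commute append_take_drop_id drop_drop)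
    have z0: "z0 \<in> idx d 3" using xs ip unfolding z0_def idx_def
      by (auto dest: in_set_takeD in_set_dropD)
    have emb: "Rop d Rm p (i+j) F (E zs) = Rop d Rm 3 j (\<lambda>zs. F (E zs)) zs"
      if "zs \<in> idx d 3" "j < 2" for F zs j
      unfolding E_def by (rule Rop_embed[OF xs ip that])
    have emb0: "Rop d Rm p i F (E zs) = Rop d Rm 3 0 (\<lambda>zs. F (E zs)) zs"
      if "zs \<in> idx d 3" for F zs using emb[OF that, of 0] by simp
    have emb1: "Rop d Rm p (i+1) F (E zs) = Rop d Rm 3 1 (\<lambda>zs. F (E zs)) zs"
      if "zs \<in> idx d 3" for F zs using emb[OF that, of 1] by simp
    have loc0: "Rop d Rm 3 k (\<lambda>zs. Rop d Rm p i F (E zs)) = Rop d Rm 3 k (Rop d Rm 3 0 (\<lambda>zs. F (E zs)))"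
      for k F by (rule Rop_local) (rule emb0)
    have loc1: "Rop d Rm 3 k (\<lambda>zs. Rop d Rm p (i+1) F (E zs)) = Rop d Rm 3 k (Rop d Rm 3 1 (\<lambda>zs. F (E zs)))"
      for k F by (rule Rop_local) (rule emb1)
    have "Rop d Rm p i (Rop d Rm p (i+1) (Rop d Rm p i f)) xs
        = Rop d Rm 3 0 (Rop d Rm 3 1 (Rop d Rm 3 0 (\<lambda>zs. f (E zs)))) z0"
    proof -
      have "Rop d Rm p i (Rop d Rm p (i+1) (Rop d Rm p i f)) xs
          = Rop d Rm 3 0 (\<lambda>zs. Rop d Rm p (i+1) (Rop d Rm p i f) (E zs)) z0"
        using emb0[OF z0] Ez0 by simp
      also have "\<dots> = Rop d Rm 3 0 (Rop d Rm 3 1 (\<lambda>zs. Rop d Rm p i f (E zs))) z0"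
        by (simp only: loc1)
      also have "\<dots> = Rop d Rm 3 0 (Rop d Rm 3 1 (Rop d Rm 3 0 (\<lambda>zs. f (E zs)))) z0"
        by (simp only: loc0)
      finally show ?thesis .
    qed
    also have "\<dots> = Rop d Rm 3 1 (Rop d Rm 3 0 (Rop d Rm 3 1 (\<lambda>zs. f (E zs)))) z0"
      using hecke_braid3[OF hk, of "\<lambda>zs. f (E zs)"] by simp
    also have "\<dots> = Rop d Rm p (i+1) (Rop d Rm p i (Rop d Rm p (i+1) f)) xs"
    proof -
      have "Rop d Rm p (i+1) (Rop d Rm p i (Rop d Rm p (i+1) f)) xs
          = Rop d Rm 3 1 (\<lambda>zs. Rop d Rm p i (Rop d Rm p (i+1) f) (E zs)) z0"
        using emb1[OF z0] Ez0 by simp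
      also have "\<dots> = Rop d Rm 3 1 (Rop d Rm 3 0 (\<lambda>zs. Rop d Rm p (i+1) f (E zs))) z0"
        by (simp only: loc0)
      also have "\<dots> = Rop d Rm 3 1 (Rop d Rm 3 0 (Rop d Rm 3 1 (\<lambda>zs. f (E zs)))) z0"
        by (simp only: loc1)
      finally show ?thesis by simp
    qed
    finally show ?thesis .
  qed
qed

lemma idx_take_drop: "xs \<in> idx d (m + k) \<longleftrightarrow> take m xs \<in> idx d m \<and> drop m xs \<in> idx d k"
proof
  assume "xs \<in> idx d (m + k)"
  then show "take m xs \<in> idx d m \<and> drop m xs \<in> idx d k"
    unfolding idx_def by (auto dest: in_set_takeD in_set_dropD)
next
  assume a: "take m xs \<in> idx d m \<and> drop m xs \<in> idx d k"
  then have "length xs = m + k" unfolding idx_def by (cases "m \<le> length xs") auto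
  moreover have "set xs \<subseteq> {..<d}"
  proof -
    have "set xs = set (take m xs) \<union> set (drop m xs)"
      by (metis append_take_drop_id set_append)
    then show ?thesis using a unfolding idx_def by auto
  qed
  ultimately show "xs \<in> idx d (m + k)" by (simp add: idx_def)
qed

lemma tmul_tensors: "a \<in> tensors d m \<Longrightarrow> b \<in> tensors d k \<Longrightarrow> tmul m a b \<in> tensors d (m + k)"
  by (auto simp: tensors_def tmul_def idx_take_drop)

lemma Rop_tmul_left:
  assumes i: "Suc i < m" and g: "g \<in> tensors d k"
  shows "Rop d Rm (m+k) i (tmul m f g) = tmul m (Rop d Rm m i f) g"
proof
  fix xs :: "nat list"
  show "Rop d Rm (m+k) i (tmul m f g) xs = tmul m (Rop d Rm m i f) g xs"
  proof (cases "xs \<in> idx d (m+k)")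
    case True
    then have t: "take m xs \<in> idx d m" and dr: "drop m xs \<in> idx d k" by (auto simp: idx_take_drop)
    have n: "take m xs ! i = xs ! i" "take m xs ! Suc i = xs ! Suc i" using i by auto
    show ?thesis using True t i
      by (simp add: Rop_at tmul_def take_update_swap n sum_distrib_right mult.assoc)
  next
    case False
    then have "take m xs \<notin> idx d m \<or> drop m xs \<notin> idx d k" by (auto simp: idx_take_drop)
    then show ?thesis using False g by (auto simp: Rop_out tmul_def tensorsD)
  qed
qed

lemma Rop_tmul_right:
  assumes i: "Suc i < k" and f: "f \<in> tensors d m"
  shows "Rop d Rm (m+k) (m+i) (tmul m f g) = tmul m f (Rop d Rm k i g)"
proof
  fix xs :: "nat list"
  show "Rop d Rm (m+k) (m+i) (tmul m f g) xs = tmul m f (Rop d Rm k i g) xs"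
  proof (cases "xs \<in> idx d (m+k)")
    case True
    then have t: "take m xs \<in> idx d m" and dr: "drop m xs \<in> idx d k" by (auto simp: idx_take_drop)
    have lx: "length xs = m + k" using True by (simp add: idx_def)
    have n: "drop m xs ! i = xs ! (m+i)" "drop m xs ! Suc i = xs ! Suc (m + i)" using lx by auto
    have u: "drop m (xs[m+i := a, Suc (m+i) := b]) = (drop m xs)[i := a, Suc i := b]" for a b
      by (simp add: drop_update_swap)
    show ?thesis using True dr i
      by (simp add: Rop_at tmul_def u n sum_distrib_left mult.left_commute)
  next
    case False
    then have "take m xs \<notin> idx d m \<or> drop m xs \<notin> idx d k" by (auto simp: idx_take_drop)
    then show ?thesis using False f by (auto simp: Rop_out tmul_def tensorsD)
  qed
qed

lemma tmul_assoc: "tmul (i + j) (tmul i a b) c = tmul i a (tmul j b c)"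
  by (simp add: tmul_def fun_eq_iff drop_take add.commute mult.assoc)



definition P :: "(nat \<Rightarrow> 'a \<Rightarrow> 'a) \<Rightarrow> nat \<Rightarrow> nat \<Rightarrow> 'a \<Rightarrow> 'a" where
  "P s a b f = foldl (\<lambda>g i. s i g) f [a..<b]"

lemma P_same[simp]: "P s a a f = f" by (simp add: P_def)

lemma P_Suc: "a \<le> b \<Longrightarrow> P s a (Suc b) f = s b (P s a b f)"
  by (simp add: P_def)

lemma P_first: "a < b \<Longrightarrow> P s a b f = P s (Suc a) b (s a f)"
  by (simp add: P_def upt_rec)

lemma P_comm:
  assumes "\<And>i g. a \<le> i \<Longrightarrow> i < b \<Longrightarrow> s i (s j g) = s j (s i g)"
  shows "P s a b (s j f) = s j (P s a b f)"
  using assms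
proof (induction b)
  case 0 then show ?case by (simp add: P_def)
next
  case (Suc b)
  show ?case
  proof (cases "a \<le> b")
    case True
    then show ?thesis using Suc by (simp add: P_Suc)
  next
    case False
    then have "[a..<Suc b] = []" by simp
    then show ?thesis by (simp add: P_def)
  qed
qed

locale braidsys =
  fixes s :: "nat \<Rightarrow> 'a \<Rightarrow> 'a" and N :: nat
  assumes far: "\<And>i j g. i + 2 \<le> j \<Longrightarrow> j \<le> N \<Longrightarrow> s i (s j g) = s j (s i g)"
    and braid: "\<And>i g. i + 1 \<le> N \<Longrightarrow> s i (s (i+1) (s i g)) = s (i+1) (s i (s (i+1) g))"
begin

lemma push:
  assumes "1 \<le> j" "j < m" "m \<le> N + 1"
  shows "P s 0 m (s j f) = s (j-1) (P s 0 m f)"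
  using assms
proof (induction m arbitrary: j)
  case 0 then show ?case by simp
next
  case (Suc m)
  show ?case
  proof (cases "j < m")
    case True
    then have "P s 0 (Suc m) (s j f) = s m (s (j-1) (P s 0 m f))"
      using Suc by (simp add: P_Suc)
    also have "\<dots> = s (j-1) (s m (P s 0 m f))"
      using True Suc.prems by (intro far[symmetric]) auto
    finally show ?thesis by (simp add: P_Suc)
  next
    case False
    then have jm: "j = m" using Suc.prems by simp
    then obtain m' where m': "m = Suc m'" using Suc.prems by (cases m) auto
    have c: "P s 0 m' (s m f) = s m (P s 0 m' f)"
      by (rule P_comm) (rule far, use m' Suc.prems in auto)
    have "P s 0 (Suc m) (s j f) = s m (s m' (s m (P s 0 m' f)))"
      using jm m' c by (simp add: P_Suc)
    also have "\<dots> = s m' (s m (s m' (P s 0 m' f)))"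
      using braid[of m' "P s 0 m' f"] m' Suc.prems by simp
    also have "\<dots> = s (j-1) (P s 0 (Suc m) f)"
      using jm m' by (simp add: P_Suc)
    finally show ?thesis .
  qed
qed

lemma two:
  assumes "Suc k \<le> m" "m \<le> N + 1"
  shows "P s 0 m (P s 1 (Suc k) f) = P s 0 k (P s 0 m f)"
  using assms
proof (induction k)
  case 0 then show ?case by simp
next
  case (Suc k)
  have "P s 0 m (P s 1 (Suc (Suc k)) f) = P s 0 m (s (Suc k) (P s 1 (Suc k) f))"
    by (simp add: P_Suc)
  also have "\<dots> = s k (P s 0 m (P s 1 (Suc k) f))"
    using push[of "Suc k" m] Suc.prems by simp
  also have "\<dots> = P s 0 (Suc k) (P s 0 m f)"
    using Suc by (simp add: P_Suc)
  finally show ?case .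
qed

lemma block:
  "P s 0 N (P s 1 (Suc N) (s 0 f)) = s N (P s 0 N (P s 1 (Suc N) f))"
proof -
  have "P s 1 (Suc N) (s 0 f) = P s 0 (Suc N) f" by (simp add: P_first)
  then have "P s 0 N (P s 1 (Suc N) (s 0 f)) = P s 0 N (P s 0 (Suc N) f)" by simp
  also have "\<dots> = P s 0 (Suc N) (P s 1 (Suc N) f)" using two[of N "Suc N" f] by simp
  also have "\<dots> = s N (P s 0 N (P s 1 (Suc N) f))" by (simp add: P_Suc)
  finally show ?thesis .
qed

end

lemma Rop_braidsys:
  assumes "hecke d Rm q"
  shows "braidsys (Rop d Rm (n+2)) n"
proof
  fix i j :: nat and g assume "i + 2 \<le> j" then show "Rop d Rm (n+2) i (Rop d Rm (n+2) j g) = Rop d Rm (n+2) j (Rop d Rm (n+2) i g)"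
    by (rule Rop_far)
next
  fix i :: nat and g assume "i + 1 \<le> n"
  then show "Rop d Rm (n+2) i (Rop d Rm (n+2) (i+1) (Rop d Rm (n+2) i g)) = Rop d Rm (n+2) (i+1) (Rop d Rm (n+2) i (Rop d Rm (n+2) (i+1) g))"
    by (intro Rop_braid[OF assms]) simp
qed

lemma lin_P: "(\<And>i. lin (s i)) \<Longrightarrow> lin (P s a b)"
proof -
  assume h: "\<And>i. lin (s i)"
  have "lin (\<lambda>f. foldl (\<lambda>g i. s i g) f xs)" for xs
  proof (induction xs rule: rev_induct)
    case Nil then show ?case by (simp add: lin_id)
  next
    case (snoc x xs) then show ?case using lin_comp[OF h[of x]] by simp
  qed
  then show ?thesis unfolding P_def by (simp add: fun_eq_iff)
qed

lemma P_tmul_left: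
  assumes "Suc b \<le> m" "g \<in> tensors d k" "p = m + k"
  shows "P (Rop d Rm p) a b (tmul m f g) = tmul m (P (Rop d Rm m) a b f) g"
  using assms(1)
proof (induction b)
  case 0 then show ?case by (simp add: P_def)
next
  case (Suc b)
  show ?case
  proof (cases "a \<le> b")
    case True
    then show ?thesis using Suc assms by (simp add: P_Suc Rop_tmul_left)
  next
    case False
    then have "[a..<Suc b] = []" by simp
    then show ?thesis by (simp add: P_def)
  qed
qed

lemma P_tmul_right:
  assumes "Suc b \<le> k" "f \<in> tensors d m" "p = m + k"
  shows "P (Rop d Rm p) (m + a) (m + b) (tmul m f g) = tmul m f (P (Rop d Rm k) a b g)"
  using assms(1)
proof (induction b)
  case 0 then show ?case by (simp add: P_def)
next
  case (Suc b)
  show ?case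
  proof (cases "a \<le> b")
    case True
    have "P (Rop d Rm p) (m + a) (m + Suc b) (tmul m f g) = Rop d Rm p (m + b) (P (Rop d Rm p) (m + a) (m + b) (tmul m f g))"
      using True P_Suc[of "m+a" "m+b"] by simp
    then show ?thesis using Suc assms True by (simp add: P_Suc Rop_tmul_right)
  next
    case False
    then have "[m+a..<m + Suc b] = []" "[a..<Suc b] = []" by simp_all
    then show ?thesis by (simp add: P_def)
  qed
qed

lemma Rchain_P: "Rchain d Rm n f = P (Rop d Rm (Suc n)) 0 n f"
  by (simp add: Rchain_def P_def)



lemma thpow_lin: "lin (thpow d Th p)"
  by (simp add: lin_def thpow_def tscale_def fun_eq_iff distrib_left sum.distrib sum_distrib_left mult.left_commute)

lemma thpow_tensors: "thpow d Th p f \<in> tensors d p"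
  by (auto simp: tensors_def thpow_def)

lemma thpow_out: "xs \<notin> idx d p \<Longrightarrow> thpow d Th p f xs = 0"
  by (simp add: thpow_def)

lemma thpow_at: "xs \<in> idx d p \<Longrightarrow> thpow d Th p f xs = (\<Sum>ys\<in>idx d p. (\<Prod>k<p. Th (xs!k) (ys!k)) * f ys)"
  by (simp add: thpow_def)

lemma prod_lessThan_add: "(\<Prod>l<m+k. g l) = (\<Prod>l<m. g l) * (\<Prod>l<k. g (m + l)) "
  for g :: "nat \<Rightarrow> 'a::comm_monoid_mult"
  by (induction k) (simp_all add: mult.assoc)

lemma idx_append: "idx d (m + k) = (\<lambda>(u, v). u @ v) ` (idx d m \<times> idx d k)"
proof
  show "idx d (m + k) \<subseteq> (\<lambda>(u, v). u @ v) ` (idx d m \<times> idx d k)"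
  proof
    fix xs assume "xs \<in> idx d (m + k)"
    then have "(take m xs, drop m xs) \<in> idx d m \<times> idx d k" by (simp add: idx_take_drop)
    then show "xs \<in> (\<lambda>(u, v). u @ v) ` (idx d m \<times> idx d k)"
      by (metis (no_types, lifting) append_take_drop_id case_prod_conv image_eqI)
  qed
  show "(\<lambda>(u, v). u @ v) ` (idx d m \<times> idx d k) \<subseteq> idx d (m + k)"
    by (auto simp: idx_def)
qed

lemma inj_append: "inj_on (\<lambda>(u, v). u @ v) (idx d m \<times> idx d k)"
  by (auto simp: inj_on_def idx_def)

lemma sum_cart: "(\<Sum>uv\<in>A \<times> B. g (fst uv) (snd uv)) = (\<Sum>u\<in>A. \<Sum>v\<in>B. g u v)"
  by (simp only: sum.cartesian_product case_prod_unfold)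

lemma thpow_tmul: "thpow d Th (m + k) (tmul m a b) = tmul m (thpow d Th m a) (thpow d Th k b)"
proof
  fix xs :: "nat list"
  show "thpow d Th (m + k) (tmul m a b) xs = tmul m (thpow d Th m a) (thpow d Th k b) xs"
  proof (cases "xs \<in> idx d (m + k)")
    case False
    then have "take m xs \<notin> idx d m \<or> drop m xs \<notin> idx d k" by (auto simp: idx_take_drop)
    then show ?thesis using False by (auto simp: thpow_out tmul_def)
  next
    case True
    then have t: "take m xs \<in> idx d m" and dr: "drop m xs \<in> idx d k" by (auto simp: idx_take_drop)
    have lx: "length xs = m + k" using True by (simp add: idx_def)
    have pr: "(\<Prod>l<m+k. Th (xs!l) ((u @ v)!l)) = (\<Prod>l<m. Th (take m xs ! l) (u!l)) * (\<Prod>l<k. Th (drop m xs ! l) (v!l))"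
      if "u \<in> idx d m" for u v
      using that lx by (simp add: prod_lessThan_add nth_append idx_def)
    have "thpow d Th (m + k) (tmul m a b) xs
        = (\<Sum>uv\<in>idx d m \<times> idx d k. (\<Prod>l<m+k. Th (xs!l) ((fst uv @ snd uv)!l)) * tmul m a b (fst uv @ snd uv))"
      unfolding thpow_at[OF True] idx_append by (subst sum.reindex[OF inj_append]) (simp add: case_prod_beta)
    also have "\<dots> = (\<Sum>uv\<in>idx d m \<times> idx d k. ((\<Prod>l<m. Th (take m xs ! l) (fst uv!l)) * a (fst uv)) * ((\<Prod>l<k. Th (drop m xs ! l) (snd uv!l)) * b (snd uv)))"
    proof (rule sum.cong[OF refl])
      fix uv assume uv: "uv \<in> idx d m \<times> idx d k"
      then have u: "fst uv \<in> idx d m" by auto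
      then have lu: "length (fst uv) = m" by (simp add: idx_def)
      show "(\<Prod>l<m+k. Th (xs!l) ((fst uv @ snd uv)!l)) * tmul m a b (fst uv @ snd uv) = ((\<Prod>l<m. Th (take m xs ! l) (fst uv!l)) * a (fst uv)) * ((\<Prod>l<k. Th (drop m xs ! l) (snd uv!l)) * b (snd uv))"
        unfolding pr[OF u] by (simp add: tmul_def lu mult_ac)
    qed
    also have "\<dots> = (\<Sum>u\<in>idx d m. (\<Prod>l<m. Th (take m xs ! l) (u!l)) * a u) * (\<Sum>v\<in>idx d k. (\<Prod>l<k. Th (drop m xs ! l) (v!l)) * b v)"
      by (simp only: sum_cart[where g="\<lambda>u v. ((\<Prod>l<m. Th (take m xs ! l) (u!l)) * a u) * ((\<Prod>l<k. Th (drop m xs ! l) (v!l)) * b v)"] sum_product)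
    also have "\<dots> = tmul m (thpow d Th m a) (thpow d Th k b) xs"
      using t dr by (simp add: tmul_def thpow_at)
    finally show ?thesis .
  qed
qed

lemma idx_Suc: "idx d (Suc p) = (\<lambda>(y, ys). y # ys) ` ({..<d} \<times> idx d p)"
proof
  show "idx d (Suc p) \<subseteq> (\<lambda>(y, ys). y # ys) ` ({..<d} \<times> idx d p)"
  proof
    fix xs assume "xs \<in> idx d (Suc p)"
    then obtain y ys where "xs = y # ys" "y < d" "ys \<in> idx d p"
      by (cases xs) (auto simp: idx_def)
    then show "xs \<in> (\<lambda>(y, ys). y # ys) ` ({..<d} \<times> idx d p)" by force
  qed
  show "(\<lambda>(y, ys). y # ys) ` ({..<d} \<times> idx d p) \<subseteq> idx d (Suc p)"
    by (auto simp: idx_def)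
qed

lemma sum_idx_prod: "(\<Sum>ys\<in>idx d p. \<Prod>l<p. F l (ys!l)) = (\<Prod>l<p. \<Sum>y<d. F l y)"
  for F :: "nat \<Rightarrow> nat \<Rightarrow> 'a::comm_semiring_1"
proof (induction p arbitrary: F)
  case 0
  have "idx d 0 = {[]}" by (auto simp: idx_def)
  then show ?case by simp
next
  case (Suc p)
  have inj: "inj_on (\<lambda>(y, ys). y # ys) ({..<d} \<times> idx d p)" by (auto simp: inj_on_def)
  have "(\<Sum>ys\<in>idx d (Suc p). \<Prod>l<Suc p. F l (ys!l))
      = (\<Sum>yys\<in>{..<d} \<times> idx d p. F 0 (fst yys) * (\<Prod>l<p. F (Suc l) (snd yys ! l)))"
    unfolding idx_Suc by (subst sum.reindex[OF inj]) (simp add: case_prod_beta prod.lessThan_Suc_shift del: prod.lessThan_Suc)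
  also have "\<dots> = (\<Sum>y<d. F 0 y) * (\<Sum>ys\<in>idx d p. \<Prod>l<p. F (Suc l) (ys ! l))"
    by (simp only: sum_cart[where g="\<lambda>y ys. F 0 y * (\<Prod>l<p. F (Suc l) (ys ! l))"]) (simp add: sum_product)
  also have "\<dots> = (\<Prod>l<Suc p. \<Sum>y<d. F l y)"
    using Suc[of "\<lambda>l. F (Suc l)"] by (simp add: prod.lessThan_Suc_shift del: prod.lessThan_Suc)
  finally show ?case .
qed

definition mprod :: "nat \<Rightarrow> (nat \<Rightarrow> nat \<Rightarrow> 'k::field) \<Rightarrow> (nat \<Rightarrow> nat \<Rightarrow> 'k) \<Rightarrow> nat \<Rightarrow> nat \<Rightarrow> 'k" where
  "mprod d A B = (\<lambda>x z. \<Sum>y<d. A x y * B y z)"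

lemma thpow_comp: "thpow d A p (thpow d B p f) = thpow d (mprod d A B) p f"
proof
  fix xs :: "nat list"
  show "thpow d A p (thpow d B p f) xs = thpow d (mprod d A B) p f xs"
  proof (cases "xs \<in> idx d p")
    case False then show ?thesis by (simp add: thpow_out)
  next
    case True
    have "thpow d A p (thpow d B p f) xs
       = (\<Sum>ys\<in>idx d p. \<Sum>zs\<in>idx d p. (\<Prod>k<p. A (xs!k) (ys!k)) * ((\<Prod>k<p. B (ys!k) (zs!k)) * f zs))"
      using True by (simp add: thpow_at sum_distrib_left)
    also have "\<dots> = (\<Sum>zs\<in>idx d p. \<Sum>ys\<in>idx d p. (\<Prod>k<p. A (xs!k) (ys!k) * B (ys!k) (zs!k)) * f zs)"
      by (subst sum.swap) (simp add: prod.distrib mult.assoc)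
    also have "\<dots> = (\<Sum>zs\<in>idx d p. (\<Prod>k<p. mprod d A B (xs!k) (zs!k)) * f zs)"
    proof (rule sum.cong[OF refl])
      fix zs
      show "(\<Sum>ys\<in>idx d p. (\<Prod>k<p. A (xs!k) (ys!k) * B (ys!k) (zs!k)) * f zs) = (\<Prod>k<p. mprod d A B (xs!k) (zs!k)) * f zs"
        using sum_idx_prod[where d=d and p=p and F="\<lambda>l y. A (xs!l) y * B y (zs!l)"]
        by (simp add: sum_distrib_right[symmetric] mprod_def)
    qed
    also have "\<dots> = thpow d (mprod d A B) p f xs" using True by (simp add: thpow_at)
    finally show ?thesis .
  qed
qed

lemma thpow_ident:
  assumes I: "\<And>x z. x < d \<Longrightarrow> z < d \<Longrightarrow> C x z = (if x = z then 1 else 0)"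
    and f: "f \<in> tensors d p"
  shows "thpow d C p f = f"
proof
  fix xs :: "nat list"
  show "thpow d C p f xs = f xs"
  proof (cases "xs \<in> idx d p")
    case False then show ?thesis using f by (simp add: thpow_out tensorsD)
  next
    case True
    have "(\<Prod>k<p. C (xs!k) (zs!k)) = (if xs = zs then 1 else 0)" if zs: "zs \<in> idx d p" for zs
    proof -
      have lt: "xs!k < d" "zs!k < d" if "k < p" for k
      proof -
        have "length xs = p" "length zs = p" "set xs \<subseteq> {..<d}" "set zs \<subseteq> {..<d}" using True zs by (auto simp: idx_def)
        then show "xs!k < d" "zs!k < d" using that nth_mem by (metis lessThan_iff subsetD)+
      qed
      have "(\<Prod>k<p. C (xs!k) (zs!k)) = (\<Prod>k<p. if xs!k = zs!k then 1 else 0)"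
        using lt I by (intro prod.cong) auto
      also have "\<dots> = (if xs = zs then 1 else 0)"
      proof (cases "xs = zs")
        case True then show ?thesis by simp
      next
        case False
        have len: "length xs = p" "length zs = p" using \<open>xs \<in> idx d p\<close> zs by (auto simp: idx_def)
        then obtain k where "k < p" "xs!k \<noteq> zs!k" using False nth_equalityI by metis
        then show ?thesis using False by (auto intro: prod_zero)
      qed
      finally show ?thesis .
    qed
    then have "thpow d C p f xs = (\<Sum>zs\<in>idx d p. if xs = zs then f zs else 0)"
      using True unfolding thpow_at[OF True] by (intro sum.cong) auto
    also have "\<dots> = f xs" using True finite_idx by (simp add: sum.delta)
    finally show ?thesis .
  qed
qed



lemma lin_tmul1: "lin (\<lambda>w. tmul m w c)"
  by (simp add: lin_def tmul_def tscale_def fun_eq_iff algebra_simps)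

lemma lin_tmul2: "lin (\<lambda>w. tmul m c w)"
  by (simp add: lin_def tmul_def tscale_def fun_eq_iff algebra_simps)

lemma lin_diff: "lin L \<Longrightarrow> L (f - g) = L f - L g"
proof -
  assume "lin L"
  then have "L f = L (f - g) + L g" unfolding lin_def by (metis diff_add_cancel)
  then show ?thesis by (simp add: algebra_simps)
qed

lemma tmul_cancel:
  assumes t: "t \<in> tensors d n" "t \<noteq> 0" and eq: "tmul n t g = tmul n t h"
  shows "g = h"
proof
  fix ys
  obtain xs where xs: "t xs \<noteq> 0" using t(2) by (auto simp: fun_eq_iff)
  then have "xs \<in> idx d n" using t(1) by (auto simp: tensors_def)
  then have l: "length xs = n" by (simp add: idx_def)
  have "tmul n t g (xs @ ys) = tmul n t h (xs @ ys)" using eq by simp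
  then have "t xs * g ys = t xs * h ys" using l by (simp add: tmul_def)
  then show "g ys = h ys" using xs by simp
qed

lemma delta_tensors: "xs \<in> idx d p \<Longrightarrow> delta xs \<in> tensors d p"
  by (auto simp: tensors_def delta_def)

lemma delta2: "delta [a, b] = tmul 1 (delta [a]) (delta [b])"
  by (auto simp: fun_eq_iff delta_def tmul_def)
     (metis Cons_nth_drop_Suc One_nat_def drop0 drop_eq_Nil2 list.sel(1) list.sel(3) not_less take_eq_Nil
        hd_take length_0_conv list.collapse take_Suc_Cons take_tl)



lemma part1:
  fixes d n :: nat and Rm :: "nat \<Rightarrow> nat \<Rightarrow> nat \<Rightarrow> nat \<Rightarrow> 'k::field" and q :: 'k
    and t :: "nat list \<Rightarrow> 'k" and Th :: "nat \<Rightarrow> nat \<Rightarrow> 'k"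
  assumes hk: "hecke d Rm q"
    and tT: "t \<in> tensors d n" and t_nz: "t \<noteq> 0"
    and theta_def: "\<forall>v \<in> tensors d 1.
        Rchain d Rm n (tmul 1 v t) = tmul n t (thpow d Th 1 v)"
  shows "\<forall>f \<in> tensors d 2. thpow d Th 2 (Rop d Rm 2 0 f) = Rop d Rm 2 0 (thpow d Th 2 f)"
proof
  define s where "s = Rop d Rm (n+2)"
  define B where "B = (\<lambda>f. P s 0 n (P s 1 (Suc n) f))"
  have linB: "lin B" unfolding B_def s_def
    by (rule lin_comp) (rule lin_P, rule Rop_lin)+
  have th2: "thpow d Th 2 (tmul 1 v1 v2) = tmul 1 (thpow d Th 1 v1) (thpow d Th 1 v2)" for v1 v2
    using thpow_tmul[of d Th 1 1] by (simp add: numeral_2_eq_2)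
  have step: "B (tmul 1 v1 (tmul 1 v2 t)) = tmul n t (tmul 1 (thpow d Th 1 v1) (thpow d Th 1 v2))"
    if v1: "v1 \<in> tensors d 1" and v2: "v2 \<in> tensors d 1" for v1 v2
  proof -
    have "P s 1 (Suc n) (tmul 1 v1 (tmul 1 v2 t)) = tmul 1 v1 (P (Rop d Rm (n+1)) 0 n (tmul 1 v2 t))"
      using P_tmul_right[of n "n+1" v1 d 1 "n+2" Rm 0 "tmul 1 v2 t"] v1 unfolding s_def by simp
    also have "\<dots> = tmul 1 v1 (tmul n t (thpow d Th 1 v2))"
      using theta_def v2 by (simp add: Rchain_P)
    also have "\<dots> = tmul (Suc n) (tmul 1 v1 t) (thpow d Th 1 v2)"
      using tmul_assoc[of 1 n v1 t "thpow d Th 1 v2"] by simp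
    finally have 1: "P s 1 (Suc n) (tmul 1 v1 (tmul 1 v2 t)) = tmul (Suc n) (tmul 1 v1 t) (thpow d Th 1 v2)" .
    have "P s 0 n (tmul (Suc n) (tmul 1 v1 t) (thpow d Th 1 v2))
        = tmul (Suc n) (P (Rop d Rm (Suc n)) 0 n (tmul 1 v1 t)) (thpow d Th 1 v2)"
      using P_tmul_left[of n "Suc n" "thpow d Th 1 v2" d 1 "n+2" Rm 0 "tmul 1 v1 t"] thpow_tensors[of d Th 1 v2]
      unfolding s_def by simp
    also have "\<dots> = tmul (Suc n) (tmul n t (thpow d Th 1 v1)) (thpow d Th 1 v2)"
      using theta_def v1 by (simp add: Rchain_P)
    also have "\<dots> = tmul n t (tmul 1 (thpow d Th 1 v1) (thpow d Th 1 v2))"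
      using tmul_assoc[of n 1 t "thpow d Th 1 v1" "thpow d Th 1 v2"] by simp
    finally show ?thesis using 1 unfolding B_def by simp
  qed
  have main: "B (tmul 2 w t) = tmul n t (thpow d Th 2 w)" if w: "w \<in> tensors d 2" for w
  proof (rule lin_ext[where L="\<lambda>w. B (tmul 2 w t)" and M="\<lambda>w. tmul n t (thpow d Th 2 w)", OF _ _ _ w])
    show "lin (\<lambda>w. B (tmul 2 w t))" by (rule lin_comp[OF linB lin_tmul1])
    show "lin (\<lambda>w. tmul n t (thpow d Th 2 w))" by (rule lin_comp[OF lin_tmul2 thpow_lin])
    fix xs assume xs: "xs \<in> idx d 2"
    then obtain a b where ab: "xs = [a, b]" "a < d" "b < d"
      by (auto simp: idx_def numeral_2_eq_2 length_Suc_conv)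
    have da: "delta [a] \<in> tensors d 1" and db: "delta [b] \<in> tensors d 1"
      using ab by (auto intro!: delta_tensors simp: idx_def)
    have "tmul 2 (delta xs) t = tmul 1 (delta [a]) (tmul 1 (delta [b]) t)"
      using ab tmul_assoc[of 1 1 "delta [a]" "delta [b]" t] by (simp add: delta2 numeral_2_eq_2)
    then show "B (tmul 2 (delta xs) t) = tmul n t (thpow d Th 2 (delta xs))"
      using step[OF da db] ab th2[of "delta [a]" "delta [b]"] by (simp add: delta2)
  qed
  fix f :: "nat list \<Rightarrow> 'k" assume f: "f \<in> tensors d 2"
  have bs: "braidsys s n" unfolding s_def by (rule Rop_braidsys[OF hk])
  have "tmul n t (thpow d Th 2 (Rop d Rm 2 0 f)) = B (tmul 2 (Rop d Rm 2 0 f) t)"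
    using main[OF Rop_tensors] by simp
  also have "tmul 2 (Rop d Rm 2 0 f) t = s 0 (tmul 2 f t)"
    using Rop_tmul_left[of 0 2 t d n Rm f] tT unfolding s_def by (simp add: add.commute)
  also have "B (s 0 (tmul 2 f t)) = s n (B (tmul 2 f t))"
    unfolding B_def by (rule braidsys.block[OF bs])
  also have "\<dots> = s n (tmul n t (thpow d Th 2 f))" using main[OF f] by simp
  also have "\<dots> = tmul n t (Rop d Rm 2 0 (thpow d Th 2 f))"
    using Rop_tmul_right[of 0 2 t d n Rm "thpow d Th 2 f"] tT unfolding s_def by simp
  finally show "thpow d Th 2 (Rop d Rm 2 0 f) = Rop d Rm 2 0 (thpow d Th 2 f)"
    by (rule tmul_cancel[OF tT t_nz])
qed



lemma tensors_sum: "(\<And>a. a \<in> A \<Longrightarrow> F a \<in> tensors d p) \<Longrightarrow> sum F A \<in> tensors d p"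
  by (rule tensorsI) (auto simp: sum_fun_apply intro!: sum.neutral tensorsD)

lemma tensors_tscale: "f \<in> tensors d p \<Longrightarrow> tscale c f \<in> tensors d p"
  by (auto simp: tensors_def tscale_def)

lemma idx_one: "[x] \<in> idx d (Suc 0) \<longleftrightarrow> x < d"
  by (simp add: idx_def)

lemma idx_one_eq: "idx d (Suc 0) = (\<lambda>k. [k]) ` {..<d}"
  by (auto simp: idx_def length_Suc_conv)

lemma sum_idx_one: "(\<Sum>ys\<in>idx d (Suc 0). F ys) = (\<Sum>k<d. F [k])"
  unfolding idx_one_eq by (subst sum.reindex) (auto simp: inj_on_def)

lemma thpow1_at: "x < d \<Longrightarrow> thpow d Th (Suc 0) f [x] = (\<Sum>k<d. Th x k * f [k])"
  by (simp add: thpow_at idx_one sum_idx_one)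

lemma inverse_matrix:
  assumes bij: "bij_betw (thpow d Th 1) (tensors d 1) (tensors d 1)"
  obtains S where "\<And>x z. x < d \<Longrightarrow> z < d \<Longrightarrow> mprod d Th S x z = (if x = z then 1 else 0)"
    and "\<And>x z. x < d \<Longrightarrow> z < d \<Longrightarrow> mprod d S Th x z = (if x = z then 1 else 0)"
proof -
  have bij': "bij_betw (thpow d Th (Suc 0)) (tensors d (Suc 0)) (tensors d (Suc 0))" using bij by simp
  let ?th = "thpow d Th (Suc 0)"
  define g where "g = inv_into (tensors d (Suc 0)) ?th"
  have surj: "?th ` tensors d (Suc 0) = tensors d (Suc 0)" using bij' by (simp add: bij_betw_def)
  have inj: "inj_on ?th (tensors d (Suc 0))" using bij' by (simp add: bij_betw_def)
  have gT: "g u \<in> tensors d (Suc 0)" if "u \<in> tensors d (Suc 0)" for u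
    unfolding g_def using that surj by (metis inv_into_into)
  have thg: "?th (g u) = u" if "u \<in> tensors d (Suc 0)" for u
    unfolding g_def using that surj by (metis f_inv_into_f)
  define S where "S = (\<lambda>k j. g (delta [j]) [k])"
  have dT: "delta [j] \<in> tensors d (Suc 0)" if "j < d" for j
    using that by (auto intro!: delta_tensors simp: idx_def)
  have TS: "mprod d Th S x z = (if x = z then 1 else 0)" if "x < d" "z < d" for x z
  proof -
    have "?th (g (delta [z])) [x] = delta [z] [x]" using thg[OF dT[OF that(2)]] by simp
    then show ?thesis using that by (simp add: thpow1_at mprod_def S_def delta_def)
  qed
  have ST: "mprod d S Th x z = (if x = z then 1 else 0)" if "x < d" "z < d" for x z
  proof -
    define u where "u = (\<Sum>i<d. tscale (Th i z) (g (delta [i])))"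
    have uT: "u \<in> tensors d (Suc 0)" unfolding u_def
      by (rule tensors_sum, rule tensors_tscale, rule gT, rule dT, simp)
    have "?th u = (\<Sum>i<d. tscale (Th i z) (?th (g (delta [i]))))"
      unfolding u_def using thpow_lin[of d Th 1] by (simp add: lin_sum) (simp add: lin_def)
    also have "\<dots> = (\<Sum>i<d. tscale (Th i z) (delta [i]))"
      by (rule sum.cong[OF refl]) (simp add: thg dT)
    also have "\<dots> = ?th (delta [z])"
    proof
      fix xs :: "nat list"
      show "(\<Sum>i<d. tscale (Th i z) (delta [i])) xs = ?th (delta [z]) xs"
      proof (cases "xs \<in> idx d (Suc 0)")
        case True
        then obtain y where y: "xs = [y]" "y < d" by (auto simp: idx_def length_Suc_conv)
        then show ?thesis using that
          by (simp add: sum_fun_apply tscale_def delta_def thpow1_at if_distrib cong: if_cong)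
      next
        case False
        then have "xs \<noteq> [i]" if "i < d" for i using that by (auto simp: idx_def)
        then show ?thesis using False by (simp add: sum_fun_apply tscale_def delta_def thpow_out)
      qed
    qed
    finally have "u = delta [z]" using inj uT dT[OF that(2)] by (auto dest: inj_onD)
    then have "u [x] = delta [z] [x]" by simp
    then show ?thesis by (simp add: u_def sum_fun_apply tscale_def mprod_def S_def delta_def mult.commute)
  qed
  show ?thesis using that TS ST by blast
qed



lemma tensors_subspace: "module.subspace tscale (tensors d p)"
  unfolding module.subspace_def[OF module_tscale]
  by (auto simp: tensors_def tscale_def) (metis add_0)

lemma KerRq_tensors: "KerRq d Rm q \<subseteq> tensors d 2"
  by (auto simp: KerRq_def)

lemma ImRq_tensors: "ImRq d Rm q \<subseteq> tensors d 2"
  by (auto simp: ImRq_def tensors_def Rop_def tscale_def)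

lemma ideal_tensors:
  fixes W :: "(nat list \<Rightarrow> 'k::field) set"
  assumes "W \<subseteq> tensors d 2"
  shows "ideal_comp d W p \<subseteq> tensors d p"
  unfolding ideal_comp_def tspan_def
proof (rule module.span_minimal[OF module_tscale _ tensors_subspace])
  show "{tmul (i + 2) (tmul i a w) b |i a w b. i + 2 \<le> p \<and> a \<in> tensors d i \<and> w \<in> W \<and> b \<in> tensors d (p - i - 2)} \<subseteq> tensors d p"
  proof clarify
    fix i :: nat and a w b :: "nat list \<Rightarrow> 'k" assume h: "i + 2 \<le> p" "a \<in> tensors d i" "w \<in> W" "b \<in> tensors d (p - i - 2)"
    have "tmul (i + 2) (tmul i a w) b \<in> tensors d (i + 2 + (p - i - 2))"
      using h assms by (intro tmul_tensors) auto
    moreover have "i + 2 + (p - i - 2) = p" using h(1) by simp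
    ultimately show "tmul (i + 2) (tmul i a w) b \<in> tensors d p" by metis
  qed
qed

lemma gen_pres:
  assumes comm: "\<forall>f \<in> tensors d 2. thpow d M 2 (Rop d Rm 2 0 f) = Rop d Rm 2 0 (thpow d M 2 f)"
    and W: "W = KerRq d Rm q \<or> W = ImRq d Rm q"
  shows "thpow d M p ` ideal_comp d W p \<subseteq> ideal_comp d W p"
proof -
  have L: "lin (thpow d M 2)" by (rule thpow_lin)
  have Wp: "thpow d M 2 w \<in> W" if w: "w \<in> W" for w
    using W
  proof
    assume WK: "W = KerRq d Rm q"
    then have wt: "w \<in> tensors d 2" and w0: "Rop d Rm 2 0 w - tscale q w = 0" using w by (auto simp: KerRq_def)
    have "Rop d Rm 2 0 (thpow d M 2 w) - tscale q (thpow d M 2 w) = thpow d M 2 (Rop d Rm 2 0 w - tscale q w)"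
      using comm wt L by (simp add: lin_diff) (simp add: lin_def fun_eq_iff)
    also have "\<dots> = 0" using w0 lin_zero[OF L] by simp
    finally show ?thesis using WK thpow_tensors by (auto simp: KerRq_def)
  next
    assume WI: "W = ImRq d Rm q"
    then obtain g where g: "g \<in> tensors d 2" and wg: "w = Rop d Rm 2 0 g - tscale q g" using w by (auto simp: ImRq_def)
    have "thpow d M 2 w = Rop d Rm 2 0 (thpow d M 2 g) - tscale q (thpow d M 2 g)"
      using comm g L wg by (simp add: lin_diff) (simp add: lin_def fun_eq_iff)
    then show ?thesis using WI thpow_tensors[of d M 2 g] unfolding ImRq_def by blast
  qed
  define G where "G = {tmul (i + 2) (tmul i a w) b |i a w b. i + 2 \<le> p \<and> a \<in> tensors d i \<and> w \<in> W \<and> b \<in> tensors d (p - i - 2)}"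
  have GG: "thpow d M p x \<in> G" if "x \<in> G" for x
  proof -
    obtain i a w b where h: "x = tmul (i + 2) (tmul i a w) b" "i + 2 \<le> p" "a \<in> tensors d i" "w \<in> W" "b \<in> tensors d (p - i - 2)"
      using \<open>x \<in> G\<close> unfolding G_def by blast
    have e: "i + 2 + (p - i - 2) = p" using h(2) by simp
    have "thpow d M p x = thpow d M (i + 2 + (p - i - 2)) x" by (simp only: e)
    also have "\<dots> = tmul (i + 2) (tmul i (thpow d M i a) (thpow d M 2 w)) (thpow d M (p - i - 2) b)"
      unfolding h(1) thpow_tmul by simp
    finally show ?thesis unfolding G_def using h Wp thpow_tensors by blast
  qed
  have "tspan G \<subseteq> {x. thpow d M p x \<in> tspan G}"
    unfolding tspan_def
  proof (rule module.span_minimal[OF module_tscale])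
    show "G \<subseteq> {x. thpow d M p x \<in> module.span tscale G}"
      using GG module.span_superset[OF module_tscale] by blast
    show "module.subspace tscale {x. thpow d M p x \<in> module.span tscale G}"
      unfolding module.subspace_def[OF module_tscale]
      using thpow_lin[of d M p] lin_zero[of "thpow d M p"]
        module.span_zero[OF module_tscale] module.span_add[OF module_tscale] module.span_scale[OF module_tscale]
      by (auto simp: lin_def)
  qed
  then show ?thesis unfolding ideal_comp_def G_def[symmetric] by blast
qed



theorem corollary3p3:
  fixes d n :: nat and Rm :: "nat \<Rightarrow> nat \<Rightarrow> nat \<Rightarrow> nat \<Rightarrow> 'k::field" and q :: 'k
    and t :: "nat list \<Rightarrow> 'k" and Th :: "nat \<Rightarrow> nat \<Rightarrow> 'k"
  assumes hk: "hecke d Rm q"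
    and n_pos: "n > 0"
    and dim1: "tdim (Upsilon d Rm q n) = 1"
    and zero: "Upsilon d Rm q (Suc n) = {0}"
    and t_in: "t \<in> Upsilon d Rm q n" and t_nz: "t \<noteq> 0"
    and theta_def: "\<forall>v \<in> tensors d 1.
        Rchain d Rm n (tmul 1 v t) = tmul n t (thpow d Th 1 v)"
    and theta_GL: "bij_betw (thpow d Th 1) (tensors d 1) (tensors d 1)"
  shows "(\<forall>f \<in> tensors d 2. thpow d Th 2 (Rop d Rm 2 0 f) = Rop d Rm 2 0 (thpow d Th 2 f))
    \<and> (\<forall>p. bij_betw (thpow d Th p) (tensors d p) (tensors d p)
         \<and> thpow d Th p ` ideal_comp d (KerRq d Rm q) p = ideal_comp d (KerRq d Rm q) p
         \<and> thpow d Th p ` ideal_comp d (ImRq d Rm q) p = ideal_comp d (ImRq d Rm q) p)"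
proof -
  have tT: "t \<in> tensors d n" using t_in by (simp add: Upsilon_def)
  have P1: "\<forall>f \<in> tensors d 2. thpow d Th 2 (Rop d Rm 2 0 f) = Rop d Rm 2 0 (thpow d Th 2 f)"
    by (rule part1[OF hk tT t_nz theta_def])
  obtain S where TS: "\<And>x z. x < d \<Longrightarrow> z < d \<Longrightarrow> mprod d Th S x z = (if x = z then 1 else 0)"
    and ST: "\<And>x z. x < d \<Longrightarrow> z < d \<Longrightarrow> mprod d S Th x z = (if x = z then 1 else 0)"
    using inverse_matrix[OF theta_GL] by blast
  have inv1: "thpow d Th p (thpow d S p f) = f" if "f \<in> tensors d p" for p f
    using thpow_ident[OF TS that] by (simp add: thpow_comp)
  have inv2: "thpow d S p (thpow d Th p f) = f" if "f \<in> tensors d p" for p f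
    using thpow_ident[OF ST that] by (simp add: thpow_comp)
  have PS: "\<forall>f \<in> tensors d 2. thpow d S 2 (Rop d Rm 2 0 f) = Rop d Rm 2 0 (thpow d S 2 f)"
  proof
    fix f :: "nat list \<Rightarrow> 'k" assume f: "f \<in> tensors d 2"
    define h where "h = thpow d S 2 f"
    have hT: "h \<in> tensors d 2" unfolding h_def by (rule thpow_tensors)
    have fh: "f = thpow d Th 2 h" unfolding h_def using inv1[OF f] by simp
    have "thpow d S 2 (Rop d Rm 2 0 f) = thpow d S 2 (thpow d Th 2 (Rop d Rm 2 0 h))"
      using P1 hT fh by simp
    also have "\<dots> = Rop d Rm 2 0 h" by (rule inv2[OF Rop_tensors])
    finally show "thpow d S 2 (Rop d Rm 2 0 f) = Rop d Rm 2 0 (thpow d S 2 f)" by (simp add: h_def)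
  qed
  have eq: "thpow d Th p ` ideal_comp d W p = ideal_comp d W p"
    if W: "W = KerRq d Rm q \<or> W = ImRq d Rm q" for W p
  proof
    show "thpow d Th p ` ideal_comp d W p \<subseteq> ideal_comp d W p" by (rule gen_pres[OF P1 W])
    show "ideal_comp d W p \<subseteq> thpow d Th p ` ideal_comp d W p"
    proof
      fix x assume x: "x \<in> ideal_comp d W p"
      have WT: "W \<subseteq> tensors d 2" using W KerRq_tensors ImRq_tensors by blast
      have xT: "x \<in> tensors d p" using ideal_tensors[OF WT] x by blast
      have "thpow d S p x \<in> ideal_comp d W p" using gen_pres[OF PS W] x by blast
      moreover have "x = thpow d Th p (thpow d S p x)" using inv1[OF xT] by simp
      ultimately show "x \<in> thpow d Th p ` ideal_comp d W p" by blast
    qed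
  qed
  have bij: "bij_betw (thpow d Th p) (tensors d p) (tensors d p)" for p
    by (rule bij_betw_byWitness[where f'="thpow d S p"]) (auto simp: inv1 inv2 thpow_tensors)
  show ?thesis using P1 bij eq by blast
qed

end
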